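(* Let $G$ be a second countable locally compact group and $\Omega$ a homogeneous space of $G$. Let $F\subset P$ be closed subgroups of $G$, $Y\subset\Omega$ a compact $F$-minimal subset with $PY=Y$, and $M\subset G$ such that $mY\cap Y\neq\emptyset$ for every $m\in M$. Then $hY=Y$ for every $h\in N_G(F)\cap\overline{PMP}$.
   Context: $N_G(F)$ denotes the normalizer of $F$ in $G$. For a closed subgroup $F\subset G$, a closed $F$-invariant subset $Y\subset\Omega$ is called $F$-minimal if it contains no proper nonempty closed $F$-invariant subset, i.e. $Fy$ is dense in $Y$ for every $y\in Y$. *)

theory Defs
  imports "HOL-Analysis.Analysis" "HOL-Algebra.Group_Action"
begin

definition topological_group :: "('a, 'b) monoid_scheme \<Rightarrow> 'a topology \<Rightarrow> bool" where
  "topological_group G T \<longleftrightarrow>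
     group G \<and> topspace T = carrier G \<and> Hausdorff_space T \<and>
     continuous_map (prod_topology T T) T (\<lambda>(x, y). x \<otimes>\<^bsub>G\<^esub> y) \<and>
     continuous_map T T (\<lambda>x. inv\<^bsub>G\<^esub> x)"

text \<open>Action of g on the homogeneous space G/H (left cosets): g (xH) = (gx)H,
  extended to subsets Y of G/H.\<close>
definition coset_act :: "('a, 'b) monoid_scheme \<Rightarrow> 'a \<Rightarrow> 'a set set \<Rightarrow> 'a set set" where
  "coset_act G g Y = (\<lambda>C. g <#\<^bsub>G\<^esub> C) ` Y"

definition set_act :: "('a, 'b) monoid_scheme \<Rightarrow> 'a set \<Rightarrow> 'a set set \<Rightarrow> 'a set set" where
  "set_act G A Y = (\<Union>g\<in>A. coset_act G g Y)"

definition invariant_set :: "('a, 'b) monoid_scheme \<Rightarrow> 'a set \<Rightarrow> 'a set set \<Rightarrow> bool" where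
  "invariant_set G F Y \<longleftrightarrow> (\<forall>f\<in>F. coset_act G f Y \<subseteq> Y)"

definition minimal_set :: "('a, 'b) monoid_scheme \<Rightarrow> 'a set topology \<Rightarrow> 'a set \<Rightarrow> 'a set set \<Rightarrow> bool" where
  "minimal_set G X F Y \<longleftrightarrow>
     closedin X Y \<and> invariant_set G F Y \<and>
     (\<forall>Z. Z \<subseteq> Y \<and> Z \<noteq> {} \<and> closedin X Z \<and> invariant_set G F Z \<longrightarrow> Z = Y)"

end

theory Submission
  imports Defs
begin

lemma conj_aux:
  assumes "group G" "h \<in> carrier G" "f \<in> carrier G"
  shows "h \<otimes>\<^bsub>G\<^esub> (inv\<^bsub>G\<^esub> h \<otimes>\<^bsub>G\<^esub> f \<otimes>\<^bsub>G\<^esub> h) = f \<otimes>\<^bsub>G\<^esub> h"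
proof -
  interpret group G by fact
  show ?thesis using assms by (simp add: m_assoc[symmetric])
qed

lemma (in group) main_aux:
  fixes T :: "'a topology"
    and H F P M :: "'a set" and X :: "'a set topology" and Y :: "'a set set"
  assumes "topological_group G T" and "locally_compact_space T" and "second_countable T"
    and "subgroup H G" and "closedin T H"
    and "quotient_map T X (\<lambda>g. g <#\<^bsub>G\<^esub> H)"
    and "subgroup F G" and "closedin T F"
    and "subgroup P G" and "closedin T P"
    and "F \<subseteq> P"
    and "compactin X Y" and "minimal_set G X F Y"
    and "set_act G P Y = Y"
    and "M \<subseteq> carrier G"
    and "\<forall>m\<in>M. coset_act G m Y \<inter> Y \<noteq> {}"
  shows "\<forall>h \<in> normalizer G F \<inter> (T closure_of (P <#>\<^bsub>G\<^esub> M <#>\<^bsub>G\<^esub> P)).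
           coset_act G h Y = Y"
proof -
  note tg = assms(1)[unfolded topological_group_def]
  have topT: "topspace T = carrier G" using tg by blast
  have HT: "Hausdorff_space T" using tg by blast
  have mulc: "continuous_map (prod_topology T T) T (\<lambda>(x, y). x \<otimes> y)" using tg by blast
  have Hsub: "H \<subseteq> carrier G" using assms(4) subgroup.subset by blast
  have qm: "quotient_map T X (\<lambda>g. g <# H)" by fact
  have topX: "topspace X = (\<lambda>g. g <# H) ` carrier G"
    using qm topT unfolding quotient_map_def by simp
  have topXsub: "\<And>C. C \<in> topspace X \<Longrightarrow> C \<subseteq> carrier G"
    using topX l_coset_subset_G[OF Hsub] by blast
  have clY: "closedin X Y" and invY: "invariant_set G F Y"
    and minY: "\<And>Z. Z \<subseteq> Y \<Longrightarrow> Z \<noteq> {} \<Longrightarrow> closedin X Z \<Longrightarrow> invariant_set G F Z \<Longrightarrow> Z = Y"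
    using assms(13) unfolding minimal_set_def by blast+
  have Ysub: "Y \<subseteq> topspace X" using clY closedin_subset by blast
  have YC: "\<And>C. C \<in> Y \<Longrightarrow> C \<subseteq> carrier G" using Ysub topXsub by blast
  have actc: "continuous_map (prod_topology T X) X (\<lambda>(g, C). g <# C)"
  proof (rule continuous_compose_quotient_map)
    show "quotient_map (prod_topology T T) (prod_topology T X) (\<lambda>(x,y). (x, y <# H))"
      by (rule quotient_map_prod_right[OF assms(2) _ qm]) (simp add: HT)
    have "continuous_map (prod_topology T T) X ((\<lambda>g. g <# H) \<circ> (\<lambda>(x, y). x \<otimes> y))"
      using continuous_map_compose[OF mulc quotient_imp_continuous_map[OF qm]] .
    then show "continuous_map (prod_topology T T) X ((\<lambda>(g, C). g <# C) \<circ> (\<lambda>(x, y). (x, y <# H)))"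
      by (rule continuous_map_eq) (auto simp: topT lcos_m_assoc Hsub)
  qed
  have lc: "\<And>g. g \<in> carrier G \<Longrightarrow> continuous_map X X (\<lambda>C. g <# C)"
  proof -
    fix g assume g: "g \<in> carrier G"
    have "continuous_map X (prod_topology T X) (\<lambda>C. (g, C))"
      using g topT by (simp add: continuous_map_pairedI)
    from continuous_map_compose[OF this actc] show "continuous_map X X (\<lambda>C. g <# C)"
      by (simp add: o_def)
  qed
  have act_top: "\<And>g C. g \<in> carrier G \<Longrightarrow> C \<in> topspace X \<Longrightarrow> g <# C \<in> topspace X"
    using lc continuous_map_image_subset_topspace by blast
  have climg: "closedin X ((\<lambda>C. k <# C) ` Y)" if k: "k \<in> carrier G" for k
  proof -
    have "(\<lambda>C. k <# C) ` Y = {C \<in> topspace X. inv k <# C \<in> Y}"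
    proof (intro equalityI subsetI)
      fix C assume "C \<in> (\<lambda>C. k <# C) ` Y"
      then obtain D where D: "D \<in> Y" "C = k <# D" by blast
      then show "C \<in> {C \<in> topspace X. inv k <# C \<in> Y}"
        using k YC[OF D(1)] Ysub act_top by (auto simp: lcos_m_assoc lcos_mult_one)
    next
      fix C assume C: "C \<in> {C \<in> topspace X. inv k <# C \<in> Y}"
      then have "C = k <# (inv k <# C)"
        using k topXsub by (auto simp: lcos_m_assoc lcos_mult_one)
      then show "C \<in> (\<lambda>C. k <# C) ` Y" using C by blast
    qed
    then show ?thesis
      using closedin_continuous_map_preimage[OF lc[OF inv_closed[OF k]] clY] by simp
  qed
  have invimg: "invariant_set G F ((\<lambda>C. k <# C) ` Y)"
    if k: "k \<in> carrier G" and nk: "\<forall>f\<in>F. inv k \<otimes> f \<otimes> k \<in> F" for k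
    unfolding invariant_set_def coset_act_def
  proof (intro ballI subsetI)
    fix f C assume f: "f \<in> F" and "C \<in> (\<lambda>C. f <# C) ` (\<lambda>C. k <# C) ` Y"
    then obtain D where D: "D \<in> Y" "C = f <# (k <# D)" by blast
    have fc: "f \<in> carrier G" using f assms(7) subgroup.subset by blast
    have f': "inv k \<otimes> f \<otimes> k \<in> F" using nk f by blast
    have "C = (f \<otimes> k) <# D" using D fc k YC by (simp add: lcos_m_assoc)
    also have "\<dots> = (k \<otimes> (inv k \<otimes> f \<otimes> k)) <# D"
      using conj_aux[OF is_group k fc] by simp
    also have "\<dots> = k <# ((inv k \<otimes> f \<otimes> k) <# D)"
      using D fc k YC by (simp add: lcos_m_assoc)
    finally have "C = k <# ((inv k \<otimes> f \<otimes> k) <# D)" .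
    moreover have "(inv k \<otimes> f \<otimes> k) <# D \<in> Y"
      using invY f' D unfolding invariant_set_def coset_act_def by blast
    ultimately show "C \<in> (\<lambda>C. k <# C) ` Y" by blast
  qed
  define S where "S = {g \<in> carrier G. (\<lambda>C. g <# C) ` Y \<inter> Y \<noteq> {}}"
  have Sclosed: "closedin T S"
  proof -
    define W where "W = {p \<in> topspace (prod_topology T (subtopology X Y)). (\<lambda>(g, C). g <# C) p \<in> Y}"
    have c2: "continuous_map (prod_topology T (subtopology X Y)) X (\<lambda>(g, C). g <# C)"
      using continuous_map_from_subtopology[OF actc, of "topspace T \<times> Y"]
      by (simp add: subtopology_Times)
    have "closedin (prod_topology T (subtopology X Y)) W"
      unfolding W_def by (rule closedin_continuous_map_preimage[OF c2 clY])
    then have "closedin T (fst ` W)"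
      using closed_map_fst[OF compact_space_subtopology[OF assms(12)]] closed_map_def by blast
    moreover have "fst ` W = S"
    proof (intro equalityI subsetI)
      fix g assume "g \<in> fst ` W"
      then obtain C where "(g, C) \<in> W" by force
      then have "g \<in> carrier G" "C \<in> Y" "g <# C \<in> Y"
        unfolding W_def using topT Ysub by auto
      then show "g \<in> S" unfolding S_def by blast
    next
      fix g assume "g \<in> S"
      then obtain C where C: "g \<in> carrier G" "C \<in> Y" "g <# C \<in> Y"
        unfolding S_def by blast
      then have "(g, C) \<in> W" unfolding W_def using topT Ysub by auto
      then show "g \<in> fst ` W" by force
    qed
    ultimately show ?thesis by simp
  qed
  have Pcar: "P \<subseteq> carrier G" using assms(9) subgroup.subset by blast
  have Pact: "\<And>p C. p \<in> P \<Longrightarrow> C \<in> Y \<Longrightarrow> p <# C \<in> Y"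
    using assms(14) unfolding set_act_def coset_act_def by blast
  have PMP: "P <#> M <#> P \<subseteq> S"
  proof
    fix x assume "x \<in> P <#> M <#> P"
    then obtain p m q where pmq: "p \<in> P" "m \<in> M" "q \<in> P" "x = p \<otimes> m \<otimes> q"
      unfolding set_mult_def by blast
    have pc: "p \<in> carrier G" "q \<in> carrier G" "m \<in> carrier G" using pmq Pcar assms(15) by auto
    obtain D where D: "D \<in> Y" "m <# D \<in> Y"
      using assms(16) pmq(2) unfolding coset_act_def by blast
    have iq: "inv q \<in> P" using subgroup.m_inv_closed[OF assms(9) pmq(3)] by simp
    have CY: "inv q <# D \<in> Y" using Pact[OF iq D(1)] .
    have Dc: "D \<subseteq> carrier G" using YC[OF D(1)] .
    have xc: "x \<in> carrier G" using pc pmq(4) by simp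
    have e1: "x \<otimes> inv q = p \<otimes> m"
      using pc pmq(4) by (simp add: m_assoc)
    have "x <# (inv q <# D) = (x \<otimes> inv q) <# D"
      by (rule lcos_m_assoc[OF Dc xc inv_closed[OF pc(2)]])
    also have "\<dots> = p <# (m <# D)"
      unfolding e1 by (rule lcos_m_assoc[OF Dc pc(1) pc(3), symmetric])
    finally have "x <# (inv q <# D) \<in> Y" using Pact[OF pmq(1) D(2)] by simp
    then show "x \<in> S" unfolding S_def using CY xc by blast
  qed
  have closS: "T closure_of (P <#> M <#> P) \<subseteq> S"
    by (rule closure_of_minimal[OF PMP Sclosed])
  show ?thesis
  proof
    fix h assume h: "h \<in> normalizer G F \<inter> T closure_of (P <#> M <#> P)"
    have Fc: "F \<subseteq> carrier G" using assms(7) subgroup.subset by blast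
    have hc: "h \<in> carrier G" and hF: "h <# F #> inv h = F"
      using h Fc unfolding normalizer_def stabilizer_def by auto
    have hS: "h \<in> S" using h closS by blast
    have n1: "\<forall>f\<in>F. inv h \<otimes> f \<otimes> h \<in> F"
    proof
      fix f assume f: "f \<in> F"
      then have "f \<in> h <# F #> inv h" using hF by simp
      then obtain f' where f': "f' \<in> F" "f = h \<otimes> f' \<otimes> inv h"
        unfolding l_coset_def r_coset_def by blast
      have f'c: "f' \<in> carrier G" using f' Fc by blast
      have c1: "inv h \<otimes> (h \<otimes> f') = f'" using hc f'c by (simp add: m_assoc[symmetric])
      have "inv h \<otimes> f \<otimes> h = inv h \<otimes> (h \<otimes> f')" using f' hc f'c by (simp add: m_assoc)
      then have "inv h \<otimes> f \<otimes> h = f'" using c1 by simp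
      then show "inv h \<otimes> f \<otimes> h \<in> F" using f' by simp
    qed
    have n2: "\<forall>f\<in>F. inv (inv h) \<otimes> f \<otimes> inv h \<in> F"
    proof
      fix f assume f: "f \<in> F"
      have "h \<otimes> f \<otimes> inv h \<in> h <# F #> inv h"
        unfolding l_coset_def r_coset_def using f by blast
      then show "inv (inv h) \<otimes> f \<otimes> inv h \<in> F" using hF hc by simp
    qed
    let ?hY = "(\<lambda>C. h <# C) ` Y"
    have ne: "?hY \<inter> Y \<noteq> {}" using hS S_def by blast
    have "?hY \<inter> Y = Y"
    proof (rule minY)
      show "closedin X (?hY \<inter> Y)" using climg[OF hc] clY by blast
      show "invariant_set G F (?hY \<inter> Y)"
        using invimg[OF hc n1] invY unfolding invariant_set_def coset_act_def by blast
    qed (use ne in auto)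
    then have Ysub1: "Y \<subseteq> ?hY" by blast
    let ?iY = "(\<lambda>C. inv h <# C) ` Y"
    have iYsub: "?iY \<subseteq> Y"
    proof
      fix C assume "C \<in> ?iY"
      then obtain D where D: "D \<in> Y" "C = inv h <# D" by blast
      then obtain E where E: "E \<in> Y" "D = h <# E" using Ysub1 by blast
      have "C = E" using D E hc YC[OF E(1)] by (simp add: lcos_m_assoc lcos_mult_one)
      then show "C \<in> Y" using E by simp
    qed
    have "?iY = Y"
    proof (rule minY[OF iYsub])
      show "?iY \<noteq> {}" using ne by blast
      show "closedin X ?iY" using climg[OF inv_closed[OF hc]] .
      show "invariant_set G F ?iY" using invimg[OF inv_closed[OF hc] n2] .
    qed
    then have "?hY = (\<lambda>C. h <# C) ` ?iY" by simp
    also have "\<dots> = Y"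
      using hc YC by (force simp: image_image lcos_m_assoc lcos_mult_one)
    finally show "coset_act G h Y = Y" unfolding coset_act_def .
  qed
qed


theorem corollary3p3:
  fixes G :: "('a, 'b) monoid_scheme" and T :: "'a topology"
    and H F P M :: "'a set" and X :: "'a set topology" and Y :: "'a set set"
  assumes "topological_group G T" and "locally_compact_space T" and "second_countable T"
    and "subgroup H G" and "closedin T H"
    and "quotient_map T X (\<lambda>g. g <#\<^bsub>G\<^esub> H)"
    and "subgroup F G" and "closedin T F"
    and "subgroup P G" and "closedin T P"
    and "F \<subseteq> P"
    and "compactin X Y" and "minimal_set G X F Y"
    and "set_act G P Y = Y"
    and "M \<subseteq> carrier G"
    and "\<forall>m\<in>M. coset_act G m Y \<inter> Y \<noteq> {}"
  shows "\<forall>h \<in> normalizer G F \<inter> (T closure_of (P <#>\<^bsub>G\<^esub> M <#>\<^bsub>G\<^esub> P)).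
           coset_act G h Y = Y"
proof -
  have "group G" using assms(1) unfolding topological_group_def by blast
  then show ?thesis using group.main_aux[OF _ assms] by blast
qed

end
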